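(* Let $R$ be a commutative ring with nonzero identity, $M$ an $R$-module, $\delta$ an expansion of ideals of $R$, $I$ a proper ideal of $R$ and $N$ a submodule of $M$ with $IM\subseteq N$. Define $\delta_{(+)}$ on ideals of the idealization $R(+)M$ by $\delta_{(+)}(J(+)L)=\delta(J)(+)M$. Then $I$ is a $\delta$-$n$-ideal of $R$ if and only if $I(+)N$ is a $\delta_{(+)}$-$n$-ideal of $R(+)M$.
   Context: An expansion of ideals of a ring $R$ is a map $\delta$ from the set of ideals of $R$ to itself such that $I\subseteq\delta(I)$ for every ideal $I$, and $\delta(I)\subseteq\delta(J)$ whenever $I\subseteq J$. $\sqrt{0}$ denotes the nilradical of the ring in question. Given an expansion $\delta$ of ideals of a ring $R$, a proper ideal $I$ of $R$ is a $\delta$-$n$-ideal if whenever $a,b\in R$ with $ab\in I$ and $a\notin\sqrt{0}$, then $b\in\delta(I)$. The idealization $R(+)M=R\times M$ has componentwise addition and multiplication $(r_1,m_1)(r_2,m_2)=(r_1r_2,r_1m_2+r_2m_1)$; for an ideal $J$ of $R$ and submodule $L$ of $M$, $J(+)L=J\times L$ is an ideal of $R(+)M$ iff $JM\subseteq L$, and $\sqrt{0_{R(+)M}}=\sqrt{0_R}(+)M$. *)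

theory Defs
  imports Complex_Main
begin

definition ring_ideal :: "'a::comm_ring_1 set \<Rightarrow> bool" where
  "ring_ideal I \<longleftrightarrow> 0 \<in> I \<and> (\<forall>x\<in>I. \<forall>y\<in>I. x + y \<in> I) \<and> (\<forall>r. \<forall>x\<in>I. r * x \<in> I)"

definition nilrad :: "'a::comm_ring_1 set" where
  "nilrad = {x. \<exists>n. x ^ n = 0}"

definition expansion :: "('a::comm_ring_1 set \<Rightarrow> 'a set) \<Rightarrow> bool" where
  "expansion \<delta> \<longleftrightarrow>
     (\<forall>I. ring_ideal I \<longrightarrow> ring_ideal (\<delta> I) \<and> I \<subseteq> \<delta> I) \<and>
     (\<forall>I J. ring_ideal I \<longrightarrow> ring_ideal J \<longrightarrow> I \<subseteq> J \<longrightarrow> \<delta> I \<subseteq> \<delta> J)"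

definition delta_n_ideal :: "('a::comm_ring_1 set \<Rightarrow> 'a set) \<Rightarrow> 'a set \<Rightarrow> bool" where
  "delta_n_ideal \<delta> I \<longleftrightarrow> ring_ideal I \<and> I \<noteq> UNIV \<and>
     (\<forall>a b. a * b \<in> I \<longrightarrow> a \<notin> nilrad \<longrightarrow> b \<in> \<delta> I)"

definition idz_add :: "'a::comm_ring_1 \<times> 'm::ab_group_add \<Rightarrow> 'a \<times> 'm \<Rightarrow> 'a \<times> 'm" where
  "idz_add x y = (fst x + fst y, snd x + snd y)"

definition idz_mult :: "('a::comm_ring_1 \<Rightarrow> 'm::ab_group_add \<Rightarrow> 'm) \<Rightarrow> 'a \<times> 'm \<Rightarrow> 'a \<times> 'm \<Rightarrow> 'a \<times> 'm" where
  "idz_mult s x y = (fst x * fst y, s (fst x) (snd y) + s (fst y) (snd x))"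

definition idz_pow :: "('a::comm_ring_1 \<Rightarrow> 'm::ab_group_add \<Rightarrow> 'm) \<Rightarrow> 'a \<times> 'm \<Rightarrow> nat \<Rightarrow> 'a \<times> 'm" where
  "idz_pow s x n = (idz_mult s x ^^ n) (1, 0)"

definition idz_ideal :: "('a::comm_ring_1 \<Rightarrow> 'm::ab_group_add \<Rightarrow> 'm) \<Rightarrow> ('a \<times> 'm) set \<Rightarrow> bool" where
  "idz_ideal s K \<longleftrightarrow> (0, 0) \<in> K \<and> (\<forall>x\<in>K. \<forall>y\<in>K. idz_add x y \<in> K) \<and>
     (\<forall>z. \<forall>x\<in>K. idz_mult s z x \<in> K)"

definition idz_nilrad :: "('a::comm_ring_1 \<Rightarrow> 'm::ab_group_add \<Rightarrow> 'm) \<Rightarrow> ('a \<times> 'm) set" where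
  "idz_nilrad s = {x. \<exists>n. idz_pow s x n = (0, 0)}"

definition idz_delta_n_ideal ::
  "('a::comm_ring_1 \<Rightarrow> 'm::ab_group_add \<Rightarrow> 'm) \<Rightarrow> (('a \<times> 'm) set \<Rightarrow> ('a \<times> 'm) set) \<Rightarrow> ('a \<times> 'm) set \<Rightarrow> bool" where
  "idz_delta_n_ideal s \<Delta> K \<longleftrightarrow> idz_ideal s K \<and> K \<noteq> UNIV \<and>
     (\<forall>x y. idz_mult s x y \<in> K \<longrightarrow> x \<notin> idz_nilrad s \<longrightarrow> y \<in> \<Delta> K)"

text \<open>delta_(+)(J(+)L) = delta(J)(+)M; extended to arbitrary subsets via the first projection
  (for K = J(+)L with L nonempty, fst ` K = J).\<close>
definition delta_plus :: "('a set \<Rightarrow> 'a set) \<Rightarrow> ('a \<times> 'm) set \<Rightarrow> ('a \<times> 'm) set" where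
  "delta_plus \<delta> K = \<delta> (fst ` K) \<times> UNIV"

end

theory Submission
  imports Defs
begin

lemma idz_pow_fst: "fst (idz_pow s x n) = fst x ^ n"
  by (induct n) (auto simp: idz_pow_def idz_mult_def)

lemma idz_pow_Suc: "idz_pow s x (Suc n) = idz_mult s x (idz_pow s x n)"
  by (simp add: idz_pow_def)

lemma (in module) idz_pow_snd:
  "snd (idz_pow scale x k) = scale (of_nat k * fst x ^ (k - 1)) (snd x)"
proof (induct k)
  case 0 then show ?case by (simp add: idz_pow_def)
next
  case (Suc k)
  show ?case
  proof (cases k)
    case 0 then show ?thesis by (simp add: idz_pow_def idz_mult_def)
  next
    case (Suc j)
    have "snd (idz_pow scale x (Suc k)) =
      scale (fst x) (scale (of_nat k * fst x ^ (k - 1)) (snd x)) + scale (fst x ^ k) (snd x)"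
      using Suc.hyps by (simp add: idz_pow_Suc idz_mult_def idz_pow_fst)
    also have "\<dots> = scale (fst x * (of_nat k * fst x ^ (k - 1)) + fst x ^ k) (snd x)"
      by (simp add: scale_scale scale_left_distrib)
    also have "fst x * (of_nat k * fst x ^ (k - 1)) + fst x ^ k = of_nat (Suc k) * fst x ^ (Suc k - 1)"
      using Suc by (simp add: algebra_simps)
    finally show ?thesis .
  qed
qed

lemma (in module) idz_nil: "x \<in> idz_nilrad scale \<longleftrightarrow> fst x \<in> nilrad"
proof
  assume "x \<in> idz_nilrad scale"
  then obtain n where "idz_pow scale x n = (0,0)" by (auto simp: idz_nilrad_def)
  then have "fst x ^ n = 0" using idz_pow_fst[of scale x n] by simp
  then show "fst x \<in> nilrad" by (auto simp: nilrad_def)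
next
  assume "fst x \<in> nilrad"
  then obtain n where n: "fst x ^ n = 0" by (auto simp: nilrad_def)
  have "fst (idz_pow scale x (Suc n)) = 0" using n by (simp add: idz_pow_fst)
  moreover have "snd (idz_pow scale x (Suc n)) = 0" using n by (simp add: idz_pow_snd)
  ultimately have "idz_pow scale x (Suc n) = (0,0)" by (metis prod.collapse)
  then show "x \<in> idz_nilrad scale" by (auto simp: idz_nilrad_def)
qed

theorem proposition2p26:
  fixes s :: "'a::comm_ring_1 \<Rightarrow> 'm::ab_group_add \<Rightarrow> 'm"
    and \<delta> :: "'a set \<Rightarrow> 'a set"
    and I :: "'a set" and N :: "'m set"
  assumes "module s"
    and "expansion \<delta>"
    and "ring_ideal I" and "I \<noteq> UNIV"
    and "module.subspace s N"
    and "\<forall>i\<in>I. \<forall>m. s i m \<in> N"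
  shows "delta_n_ideal \<delta> I \<longleftrightarrow> idz_delta_n_ideal s (delta_plus \<delta>) (I \<times> N)"
proof -
  interpret module s by fact
  have N0: "0 \<in> N" using assms(5) subspace_0 by blast
  have fstI: "fst ` (I \<times> N) = I" using N0 by force
  have dp: "delta_plus \<delta> (I \<times> N) = \<delta> I \<times> UNIV" unfolding delta_plus_def fstI ..
  have idl: "idz_ideal s (I \<times> N)"
    unfolding idz_ideal_def
  proof (intro conjI ballI allI)
    show "(0,0) \<in> I \<times> N" using N0 assms(3) by (simp add: ring_ideal_def)
  next
    fix x y assume "x \<in> I \<times> N" "y \<in> I \<times> N"
    then show "idz_add x y \<in> I \<times> N" using assms(3,5)
      by (auto simp: idz_add_def ring_ideal_def intro: subspace_add)
  next
    fix z :: "'a \<times> 'm" and x assume x: "x \<in> I \<times> N"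
    have "s (fst z) (snd x) \<in> N" using x assms(5) by (auto intro: subspace_scale)
    moreover have "s (fst x) (snd z) \<in> N" using x assms(6) by auto
    ultimately show "idz_mult s z x \<in> I \<times> N" using x assms(3,5)
      by (auto simp: idz_mult_def ring_ideal_def intro: subspace_add)
  qed
  have ne: "I \<times> N \<noteq> UNIV" using assms(4) by auto
  show ?thesis
  proof
    assume h: "delta_n_ideal \<delta> I"
    show "idz_delta_n_ideal s (delta_plus \<delta>) (I \<times> N)"
      unfolding idz_delta_n_ideal_def dp
    proof (intro conjI idl ne allI impI)
      fix x y assume "idz_mult s x y \<in> I \<times> N" "x \<notin> idz_nilrad s"
      then have "fst x * fst y \<in> I" "fst x \<notin> nilrad" by (auto simp: idz_mult_def idz_nil)
      then have "fst y \<in> \<delta> I" using h by (auto simp: delta_n_ideal_def)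
      then show "y \<in> \<delta> I \<times> UNIV" by (cases y) auto
    qed
  next
    assume h: "idz_delta_n_ideal s (delta_plus \<delta>) (I \<times> N)"
    show "delta_n_ideal \<delta> I"
      unfolding delta_n_ideal_def
    proof (intro conjI assms(3,4) allI impI)
      fix a b assume ab: "a * b \<in> I" "a \<notin> nilrad"
      have "idz_mult s (a,0::'m) (b,0::'m) \<in> I \<times> N" using ab N0 by (simp add: idz_mult_def)
      moreover have "(a,0::'m) \<notin> idz_nilrad s" using ab by (simp add: idz_nil)
      ultimately have "(b,0::'m) \<in> \<delta> I \<times> UNIV" using h unfolding idz_delta_n_ideal_def dp
        by (metis (no_types, lifting))
      then show "b \<in> \<delta> I" by simp
    qed
  qed
qed

end
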